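(* Let $S$ be a numerical semigroup with $\mathrm{l}(S)=2$. Then $\{\mathrm{F}(S),\mathrm{h}(S)\}\subseteq\mathrm{PF}(S)\subseteq\{\mathrm{F}(S),\mathrm{h}(S),\mathrm{F}(S)-\mathrm{h}(S)\}$. Moreover, $\mathrm{F}(S)-\mathrm{h}(S)\in\mathrm{PF}(S)$ if and only if $2\mathrm{h}(S)-\mathrm{F}(S)\notin S$.
   Context: A numerical semigroup is a subset $S\subseteq\mathbb{N}$ closed under addition with $0\in S$ and $\mathbb{N}\setminus S$ finite; $\mathrm{F}(S)=\max(\mathbb{Z}\setminus S)$. $\mathrm{N}(S)=\{s\in S\mid s<\mathrm{F}(S)\}$, $\mathrm{L}(S)=\{x\in\mathbb{N}\setminus S\mid \mathrm{F}(S)-x\notin \mathrm{N}(S)\}$, $\mathrm{l}(S)=\#\mathrm{L}(S)$. For $\mathrm{l}(S)\ge2$, $\mathrm{h}(S)=\max\{x\in\mathbb{N}\setminus S\mid \mathrm{F}(S)-x\in\mathbb{N}\setminus S,\ x\ne \mathrm{F}(S)/2\}$. $\mathrm{PF}(S)=\{x\in\mathbb{Z}\setminus S\mid x+s\in S \text{ for all } s\in S\setminus\{0\}\}$. *)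

theory Defs
  imports Main
begin

definition numerical_semigroup :: "int set \<Rightarrow> bool" where
  "numerical_semigroup S \<longleftrightarrow> S \<subseteq> {0..} \<and> 0 \<in> S \<and> (\<forall>a\<in>S. \<forall>b\<in>S. a + b \<in> S)
     \<and> finite ({0..} - S)"

definition Frob :: "int set \<Rightarrow> int" where
  "Frob S = (GREATEST x. x \<notin> S)"

definition Nset :: "int set \<Rightarrow> int set" where
  "Nset S = {s \<in> S. s < Frob S}"

definition Lset :: "int set \<Rightarrow> int set" where
  "Lset S = {x. 0 \<le> x \<and> x \<notin> S \<and> Frob S - x \<notin> Nset S}"

definition lnum :: "int set \<Rightarrow> nat" where
  "lnum S = card (Lset S)"

text \<open>x \<noteq> F/2 is written as 2x \<noteq> F (equivalent for integers).\<close>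
definition hnum :: "int set \<Rightarrow> int" where
  "hnum S = (GREATEST x. 0 \<le> x \<and> x \<notin> S \<and> 0 \<le> Frob S - x \<and> Frob S - x \<notin> S \<and> 2 * x \<noteq> Frob S)"

definition PF :: "int set \<Rightarrow> int set" where
  "PF S = {x. x \<notin> S \<and> (\<forall>s \<in> S - {0}. x + s \<in> S)}"

end

theory Submission
  imports Defs
begin

lemma frob_props:
  assumes ns: "numerical_semigroup S"
  shows "Frob S \<notin> S" "\<And>y. y \<notin> S \<Longrightarrow> y \<le> Frob S"
proof -
  have sub: "S \<subseteq> {0..}" and fin: "finite ({0..} - S)"
    using ns unfolding numerical_semigroup_def by auto
  define M where "M = Max (insert (-1) ({0..} - S))"
  have fin2: "finite (insert (-1) ({0..} - S))" using fin by simp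
  have Mmem: "M \<in> insert (-1) ({0..} - S)" unfolding M_def using fin2 by (rule Max_in) simp
  have MnS: "M \<notin> S" using Mmem sub by auto
  have Mge: "y \<le> M" if "y \<notin> S" for y
  proof (cases "y < 0")
    case True
    have "-1 \<le> M" unfolding M_def using fin2 by simp
    then show ?thesis using True by simp
  next
    case False
    then have "y \<in> insert (-1) ({0..} - S)" using that by auto
    then show ?thesis unfolding M_def using fin2 by simp
  qed
  have "Frob S = M" unfolding Frob_def
    by (rule Greatest_equality) (use MnS Mge in auto)
  then show "Frob S \<notin> S" "\<And>y. y \<notin> S \<Longrightarrow> y \<le> Frob S" using MnS Mge by auto
qed

theorem proposition12:
  assumes "numerical_semigroup S" and "lnum S = 2"
  shows "{Frob S, hnum S} \<subseteq> PF S \<and> PF S \<subseteq> {Frob S, hnum S, Frob S - hnum S}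
         \<and> (Frob S - hnum S \<in> PF S \<longleftrightarrow> 2 * hnum S - Frob S \<notin> S)"
proof -
  define F where "F = Frob S"
  have sub: "S \<subseteq> {0..}" and z: "0 \<in> S" and add: "\<And>a b. a \<in> S \<Longrightarrow> b \<in> S \<Longrightarrow> a + b \<in> S"
    using assms(1) unfolding numerical_semigroup_def by auto
  have FnS: "F \<notin> S" and Fmax: "\<And>y. y \<notin> S \<Longrightarrow> y \<le> F"
    using frob_props[OF assms(1)] unfolding F_def by auto
  have big: "y \<in> S" if "y > F" for y using Fmax that by force
  have Lchar: "Lset S = {x. 0\<le>x \<and> x\<notin>S \<and> 0\<le>F-x \<and> F-x\<notin>S}"
  proof -
    have "x \<in> Lset S \<longleftrightarrow> 0\<le>x \<and> x\<notin>S \<and> 0\<le>F-x \<and> F-x\<notin>S" for x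
    proof
      assume "x \<in> Lset S"
      then have h: "0 \<le> x" "x \<notin> S" "F - x \<notin> Nset S"
        unfolding Lset_def F_def by auto
      have "x \<le> F" using Fmax h(2) .
      moreover have "x \<noteq> 0" using h z by auto
      ultimately show "0\<le>x \<and> x\<notin>S \<and> 0\<le>F-x \<and> F-x\<notin>S"
        using h unfolding Nset_def F_def by auto
    next
      assume "0\<le>x \<and> x\<notin>S \<and> 0\<le>F-x \<and> F-x\<notin>S"
      then show "x \<in> Lset S" unfolding Lset_def Nset_def F_def by auto
    qed
    then show ?thesis by auto
  qed
  have symL: "F - x \<in> Lset S" if "x \<in> Lset S" for x using that Lchar by auto
  have "card (Lset S) = 2" using assms(2) unfolding lnum_def .
  then obtain a b where ab: "Lset S = {a, b}" "a \<noteq> b" by (auto simp: card_2_iff)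
  have Fa: "F - a = b"
  proof (rule ccontr)
    assume ne: "F - a \<noteq> b"
    have "a \<in> Lset S" "b \<in> Lset S" using ab by auto
    then have A: "F - a \<in> {a,b}" and B: "F - b \<in> {a,b}" using symL ab(1) by metis+
    from A ne have "F - a = a" by blast
    moreover from B have "F - b = a \<or> F - b = b" by blast
    ultimately show False using ab(2) ne by linarith
  qed
  have L2: "Lset S = {a, F - a}" using ab Fa by auto
  have a2: "2 * a \<noteq> F" using Fa ab(2) by auto
  define h where "h = max a (F - a)"
  have Lh: "Lset S = {h, F - h}" using L2 unfolding h_def by (auto simp: max_def)
  have h2: "2 * h > F" using a2 unfolding h_def by (auto simp: max_def)
  have hnum_eq: "hnum S = h"
    unfolding hnum_def F_def[symmetric]
  proof (rule Greatest_equality)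
    have "h \<in> Lset S" using Lh by auto
    then show "0 \<le> h \<and> h \<notin> S \<and> 0 \<le> F - h \<and> F - h \<notin> S \<and> 2 * h \<noteq> F"
      using Lchar h2 by auto
  next
    fix y assume "0 \<le> y \<and> y \<notin> S \<and> 0 \<le> F - y \<and> F - y \<notin> S \<and> 2 * y \<noteq> F"
    then have "y \<in> Lset S" using Lchar by auto
    then show "y \<le> h" using Lh h2 by auto
  qed
  have hL: "h \<in> Lset S" "F - h \<in> Lset S" using Lh by auto
  then have hS: "h \<notin> S" "F - h \<notin> S" "0 \<le> F - h" "0 \<le> h" using Lchar by auto
  have Lkey: "y = h \<or> y = F - h" if "0\<le>y" "y\<notin>S" "0\<le>F-y" "F-y\<notin>S" for y
  proof -
    have "y \<in> Lset S" using that Lchar by auto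
    then show ?thesis using Lh by auto
  qed
  have pos: "s > 0" if "s \<in> S - {0}" for s using that sub by force
  have FPF: "F \<in> PF S" unfolding PF_def using FnS big pos by force
  have hPF: "h \<in> PF S"
    unfolding PF_def
  proof (intro CollectI conjI ballI)
    show "h \<notin> S" using hS by simp
    fix s assume s: "s \<in> S - {0}"
    have sp: "s > 0" using pos s by blast
    show "h + s \<in> S"
    proof (rule ccontr)
      assume n: "h + s \<notin> S"
      have le: "h + s \<le> F" using Fmax n .
      have "F - (h + s) \<notin> S"
      proof
        assume "F - (h + s) \<in> S"
        then have "F - (h+s) + s \<in> S" using add s by blast
        then show False using hS by simp
      qed
      then have "h + s = h \<or> h + s = F - h" using Lkey[of "h+s"] n le hS sp by auto
      then show False using sp h2 by auto
    qed
  qed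
  have PFsub: "PF S \<subseteq> {F, h, F - h}"
  proof
    fix x assume x: "x \<in> PF S"
    then have xn: "x \<notin> S" and xa: "\<And>s. s \<in> S - {0} \<Longrightarrow> x + s \<in> S" unfolding PF_def by auto
    show "x \<in> {F, h, F - h}"
    proof (cases "x = F")
      case False
      have "F - x \<notin> S"
      proof
        assume "F - x \<in> S"
        moreover have "F - x \<noteq> 0" using False by simp
        ultimately have "x + (F - x) \<in> S" using xa by blast
        then show False using FnS by simp
      qed
      moreover have "x \<le> F" using Fmax xn .
      moreover have "F - x \<le> F" using Fmax \<open>F - x \<notin> S\<close> .
      ultimately show ?thesis using Lkey[of x] xn by auto
    qed simp
  qed
  have iff: "F - h \<in> PF S \<longleftrightarrow> 2 * h - F \<notin> S"
  proof
    assume p: "F - h \<in> PF S"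
    show "2 * h - F \<notin> S"
    proof
      assume "2 * h - F \<in> S"
      moreover have "2 * h - F \<noteq> 0" using h2 by simp
      ultimately have "F - h + (2 * h - F) \<in> S" using p unfolding PF_def by blast
      then show False using hS by simp
    qed
  next
    assume n2: "2 * h - F \<notin> S"
    show "F - h \<in> PF S"
      unfolding PF_def
    proof (intro CollectI conjI ballI)
      show "F - h \<notin> S" using hS by simp
      fix s assume s: "s \<in> S - {0}"
      have sp: "s > 0" using pos s by blast
      show "F - h + s \<in> S"
      proof (rule ccontr)
        assume n: "F - h + s \<notin> S"
        have le: "F - h + s \<le> F" using Fmax n .
        have "h - s \<notin> S"
        proof
          assume "h - s \<in> S"
          then have "h - s + s \<in> S" using add s by blast
          then show False using hS by simp
        qed
        have sS: "s \<in> S" using s by simp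
        have "F - h + s = h \<or> F - h + s = F - h"
          using Lkey[of "F - h + s"] n le hS sp \<open>h - s \<notin> S\<close> by auto
        then show False
        proof
          assume "F - h + s = h"
          then have "s = 2 * h - F" by simp
          then show False using n2 sS by simp
        next
          assume "F - h + s = F - h"
          then show False using sp by simp
        qed
      qed
    qed
  qed
  show ?thesis using FPF hPF PFsub iff hnum_eq unfolding F_def by auto
qed

end
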